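(* Let $A=(a_{ij})\in M(m,\mathbb{C})$ and let $X_A$ be a complex algebra spanned by elements $\{x_{ij}:i,j=1,\ldots,m\}$ satisfying $x_{ij}x_{kl}=a_{jk}x_{il}$. Suppose the elements $x_{ij}$ are linearly independent and $\det A=0$. Then $X_A$ contains a nonzero properly nilpotent element, and consequently $X_A$ is not semisimple.
   Context: An element $z$ of an algebra $\mathcal{X}$ is properly nilpotent if $zx$ (equivalently, $xz$) is nilpotent for every $x\in\mathcal{X}$. An algebra is semisimple if its Jacobson radical (the set of properly nilpotent elements, for finite-dimensional algebras) is zero. *)

theory Defs
  imports "HOL-Analysis.Analysis"
begin

definition complex_algebra :: "(complex \<Rightarrow> 'a::ring \<Rightarrow> 'a) \<Rightarrow> bool" where
  "complex_algebra smul \<longleftrightarrow> module smul \<and>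
     (\<forall>c u v. smul c (u * v) = smul c u * v \<and> smul c (u * v) = u * smul c v)"

text \<open>y is nilpotent: y^(n+1) = 0 for some n (powers written without a unit).\<close>
definition nilpotent_elem :: "'a::ring \<Rightarrow> bool" where
  "nilpotent_elem y \<longleftrightarrow> (\<exists>n. ((\<lambda>u. u * y) ^^ n) y = 0)"

definition properly_nilpotent :: "'a::ring \<Rightarrow> bool" where
  "properly_nilpotent z \<longleftrightarrow> (\<forall>x. nilpotent_elem (z * x))"

text \<open>Jacobson radical of a finite-dimensional algebra: the set of properly nilpotent elements.\<close>
definition jacobson_radical :: "'a::ring set" where
  "jacobson_radical = {z. properly_nilpotent z}"

definition semisimple :: "'a::ring itself \<Rightarrow> bool" where
  "semisimple (_ :: 'a itself) \<longleftrightarrow> (jacobson_radical :: 'a set) = {0}"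

end

theory Submission
  imports Defs
begin

theorem theorem32:
  fixes A :: "complex ^ 'm ^ 'm"
    and smul :: "complex \<Rightarrow> 'a::ring \<Rightarrow> 'a"
    and x :: "'m \<Rightarrow> 'm \<Rightarrow> 'a"
  assumes alg: "complex_algebra smul"
    and spans: "\<forall>y. \<exists>c :: 'm \<Rightarrow> 'm \<Rightarrow> complex. y = (\<Sum>i\<in>UNIV. \<Sum>j\<in>UNIV. smul (c i j) (x i j))"
    and indep: "\<forall>c :: 'm \<Rightarrow> 'm \<Rightarrow> complex.
                  (\<Sum>i\<in>UNIV. \<Sum>j\<in>UNIV. smul (c i j) (x i j)) = 0 \<longrightarrow> (\<forall>i j. c i j = 0)"
    and rel: "\<forall>i j k l. x i j * x k l = smul (A $ j $ k) (x i l)"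
    and detA: "det A = 0"
  shows "(\<exists>z::'a. z \<noteq> 0 \<and> properly_nilpotent z) \<and> \<not> semisimple TYPE('a)"
proof -
  interpret M: module smul using alg unfolding complex_algebra_def by blast
  have comp: "smul c (u * w) = smul c u * w" "smul c (u * w) = u * smul c w" for c u w
    using alg unfolding complex_algebra_def by blast+
  have "\<not> invertible (transpose A)" using detA by (simp add: invertible_det_nz)
  then have "\<not> (\<forall>w. transpose A *v w = 0 \<longrightarrow> w = 0)"
    using invertible_left_inverse matrix_left_invertible_ker by blast
  then obtain v where v0: "v \<noteq> 0" and vk: "transpose A *v v = 0" by blast
  have vk': "(\<Sum>k\<in>UNIV. v $ k * A $ k $ p) = 0" for p
  proof -
    have "(transpose A *v v) $ p = 0" using vk by simp
    then show ?thesis by (simp add: matrix_vector_mult_def transpose_def mult.commute)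
  qed
  obtain i0 :: 'm where True by blast
  define z where "z = (\<Sum>k\<in>UNIV. smul (v $ k) (x i0 k))"
  have zx: "z * x p q = 0" for p q
  proof -
    have "z * x p q = (\<Sum>k\<in>UNIV. smul (v $ k) (x i0 k) * x p q)"
      unfolding z_def by (simp add: sum_distrib_right)
    also have "\<dots> = (\<Sum>k\<in>UNIV. smul (v $ k * A $ k $ p) (x i0 q))"
      by (simp add: comp(1)[symmetric] rel)
    also have "\<dots> = smul (\<Sum>k\<in>UNIV. v $ k * A $ k $ p) (x i0 q)"
      by (simp add: M.scale_sum_left)
    also have "\<dots> = 0" using vk' by simp
    finally show ?thesis .
  qed
  have zy: "z * y = 0" for y
  proof -
    obtain c where c: "y = (\<Sum>i\<in>UNIV. \<Sum>j\<in>UNIV. smul (c i j) (x i j))" using spans by blast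
    have "z * y = (\<Sum>i\<in>UNIV. \<Sum>j\<in>UNIV. z * smul (c i j) (x i j))"
      unfolding c by (simp add: sum_distrib_left)
    also have "\<dots> = (\<Sum>i\<in>UNIV. \<Sum>j\<in>UNIV. smul (c i j) (z * x i j))"
      by (simp add: comp(2))
    also have "\<dots> = 0" by (simp add: zx)
    finally show ?thesis .
  qed
  have pn: "properly_nilpotent z"
    unfolding properly_nilpotent_def nilpotent_elem_def
    by (metis funpow_0 zy)
  have nz: "z \<noteq> 0"
  proof
    assume z0: "z = 0"
    define c where "c = (\<lambda>i k. if i = i0 then v $ k else (0::complex))"
    have "(\<Sum>i\<in>UNIV. \<Sum>j\<in>UNIV. smul (c i j) (x i j)) = (\<Sum>i\<in>UNIV. if i = i0 then z else 0)"
      by (rule sum.cong) (auto simp: c_def z_def)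
    also have "\<dots> = 0" using z0 by simp
    finally have "\<forall>i j. c i j = 0" using indep by blast
    then have "v = 0" unfolding c_def vec_eq_iff by (metis zero_index)
    then show False using v0 by simp
  qed
  have "z \<in> (jacobson_radical :: 'a set)" using pn by (simp add: jacobson_radical_def)
  then have "\<not> semisimple TYPE('a)" using nz by (auto simp: semisimple_def)
  then show ?thesis using pn nz by blast
qed

end
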